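(* Let $J=(a,b)\subseteq\mathbb R$ be an open interval (possibly unbounded) and let $A:J\to\mathbb R$ be of class $C^2$ with $A''$ not changing sign on $J$ (i.e. $A''(x)\ge0$ for all $x\in J$, or $A''(x)\le0$ for all $x\in J$). Then $\mathtt S[\mathrm{Re}K_\Gamma](\mathbf z)\ge0$ for every three-tuple $\mathbf z$ of distinct points on $\Gamma=\{x+iA(x):x\in J\}$.
   Context: $s(x)=\sqrt{1+(A'(x))^2}$. The kernel (normalizing factor $1/(2\pi)$ omitted) is $K_\Gamma(w,z)=\dfrac{A'(x)-i}{s(x)\,[\,x-y+i(A(x)-A(y))\,]}$ for $w=x+iA(x)$, $z=y+iA(y)$, $x\neq y$; $\mathrm{Re}K_\Gamma$ is its real part. For a real-valued $K$ and distinct $z_1,z_2,z_3$, $\mathtt S[K](\mathbf z)=\sum_{\sigma\in S_3}K(z_{\sigma(1)},z_{\sigma(2)})K(z_{\sigma(1)},z_{\sigma(3)})$, $S_3$ the permutation group on three elements. *)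

theory Defs
  imports "HOL-Analysis.Analysis" "HOL-Combinatorics.Permutations"
begin

definition Gamma :: "(real \<Rightarrow> real) \<Rightarrow> real set \<Rightarrow> complex set" where
  "Gamma A J = {complex_of_real x + \<i> * complex_of_real (A x) | x. x \<in> J}"

definition sfun :: "(real \<Rightarrow> real) \<Rightarrow> real \<Rightarrow> real" where
  "sfun A' x = sqrt (1 + (A' x)\<^sup>2)"

text \<open>Kernel K_Gamma(w,z) for w = x + i A(x), z = y + i A(y) (so x = Re w, y = Re z),
  normalizing factor 1/(2 pi) omitted.\<close>
definition K_Gamma :: "(real \<Rightarrow> real) \<Rightarrow> (real \<Rightarrow> real) \<Rightarrow> complex \<Rightarrow> complex \<Rightarrow> complex" where
  "K_Gamma A A' w z =
     (let x = Re w; y = Re z in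
      (complex_of_real (A' x) - \<i>) /
      (complex_of_real (sfun A' x) *
        (complex_of_real (x - y) + \<i> * complex_of_real (A x - A y))))"

definition ReK_Gamma :: "(real \<Rightarrow> real) \<Rightarrow> (real \<Rightarrow> real) \<Rightarrow> complex \<Rightarrow> complex \<Rightarrow> real" where
  "ReK_Gamma A A' w z = Re (K_Gamma A A' w z)"

definition S3 :: "('a \<Rightarrow> 'a \<Rightarrow> real) \<Rightarrow> (nat \<Rightarrow> 'a) \<Rightarrow> real" where
  "S3 K z = (\<Sum>\<sigma> \<in> {\<sigma>. \<sigma> permutes {0,1,2::nat}}.
               K (z (\<sigma> 0)) (z (\<sigma> 1)) * K (z (\<sigma> 0)) (z (\<sigma> 2)))"

end

theory Submission
  imports Defs
begin

lemma re_aux: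
  fixes a s d e :: real
  shows "Re ((complex_of_real a - \<i>) / (complex_of_real s * (complex_of_real d + \<i> * complex_of_real e)))
    = s * (a * d - e) / (cmod (complex_of_real s * (complex_of_real d + \<i> * complex_of_real e)))\<^sup>2"
proof -
  have g: "Re ((complex_of_real a - \<i>) / q) = (a * Re q - Im q) / (cmod q)\<^sup>2" for q
    by (simp add: Re_divide cmod_power2)
  have r: "Re (complex_of_real s * (complex_of_real d + \<i> * complex_of_real e)) = s * d"
    and i: "Im (complex_of_real s * (complex_of_real d + \<i> * complex_of_real e)) = s * e"
    by simp_all
  show ?thesis unfolding g r i by (simp add: algebra_simps)
qed

lemma ReK_eq:
  "ReK_Gamma A A' w z = sfun A' (Re w) * (A' (Re w) * (Re w - Re z) - (A (Re w) - A (Re z)))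
      / (cmod (complex_of_real (sfun A' (Re w)) *
        (complex_of_real (Re w - Re z) + \<i> * complex_of_real (A (Re w) - A (Re z)))))\<^sup>2"
  unfolding ReK_Gamma_def K_Gamma_def Let_def re_aux ..

lemma sfun_nonneg: "sfun A' x \<ge> 0"
  unfolding sfun_def by simp

lemma ReK_nonneg:
  assumes "A' (Re w) * (Re w - Re z) - (A (Re w) - A (Re z)) \<ge> 0"
  shows "ReK_Gamma A A' w z \<ge> 0"
  unfolding ReK_eq using assms sfun_nonneg[of A' "Re w"] by simp

lemma ReK_nonpos:
  assumes "A' (Re w) * (Re w - Re z) - (A (Re w) - A (Re z)) \<le> 0"
  shows "ReK_Gamma A A' w z \<le> 0"
  unfolding ReK_eq using assms sfun_nonneg[of A' "Re w"]
  by (simp add: divide_nonpos_nonneg mult_nonneg_nonpos)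

theorem theorem1p7:
  fixes J :: "real set" and A A' A'' :: "real \<Rightarrow> real" and z :: "nat \<Rightarrow> complex"
  assumes J_open: "open J" and J_interval: "is_interval J"
    and dA: "\<And>x. x \<in> J \<Longrightarrow> (A has_real_derivative A' x) (at x)"
    and dA': "\<And>x. x \<in> J \<Longrightarrow> (A' has_real_derivative A'' x) (at x)"
    and cA'': "continuous_on J A''"
    and sign: "(\<forall>x\<in>J. A'' x \<ge> 0) \<or> (\<forall>x\<in>J. A'' x \<le> 0)"
    and z_on: "\<And>i. i \<in> {0,1,2} \<Longrightarrow> z i \<in> Gamma A J"
    and z_distinct: "inj_on z {0,1,2}"
  shows "S3 (ReK_Gamma A A') z \<ge> 0"
proof -
  have cvx: "convex J" using J_interval is_interval_convex_1 by blast
  have reJ: "Re (z i) \<in> J" if iin: "i \<in> {0,1,2}" for i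
  proof -
    obtain x where "z i = complex_of_real x + \<i> * complex_of_real (A x)" "x \<in> J"
      using z_on[OF iin] unfolding Gamma_def by blast
    then show ?thesis by simp
  qed
  have sgn: "(\<forall>w z. Re w \<in> J \<longrightarrow> Re z \<in> J \<longrightarrow> ReK_Gamma A A' w z \<ge> 0) \<or>
             (\<forall>w z. Re w \<in> J \<longrightarrow> Re z \<in> J \<longrightarrow> ReK_Gamma A A' w z \<le> 0)"
    using sign
  proof
    assume pos: "\<forall>x\<in>J. A'' x \<ge> 0"
    have t: "A' x * (y - x) \<le> A y - A x" if "x \<in> J" "y \<in> J" for x y
      by (rule f''_imp_f'[OF cvx dA dA']) (use pos that in auto)
    have "ReK_Gamma A A' w v \<ge> 0" if "Re w \<in> J" "Re v \<in> J" for w v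
    proof (rule ReK_nonneg)
      have "A' (Re w) * (Re v - Re w) \<le> A (Re v) - A (Re w)" using t that by blast
      then show "0 \<le> A' (Re w) * (Re w - Re v) - (A (Re w) - A (Re v))"
        by (simp add: right_diff_distrib)
    qed
    then show ?thesis by blast
  next
    assume neg: "\<forall>x\<in>J. A'' x \<le> 0"
    have d1: "((\<lambda>x. - A x) has_real_derivative - A' x) (at x)" if "x \<in> J" for x
      using dA[OF that] by (rule DERIV_minus)
    have d2: "((\<lambda>x. - A' x) has_real_derivative - A'' x) (at x)" if "x \<in> J" for x
      using dA'[OF that] by (rule DERIV_minus)
    have t: "(- A' x) * (y - x) \<le> (- A y) - (- A x)" if "x \<in> J" "y \<in> J" for x y
      by (rule f''_imp_f'[OF cvx d1 d2]) (use neg that in auto)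
    have "ReK_Gamma A A' w v \<le> 0" if "Re w \<in> J" "Re v \<in> J" for w v
    proof (rule ReK_nonpos)
      have "(- A' (Re w)) * (Re v - Re w) \<le> (- A (Re v)) - (- A (Re w))" using t that by blast
      then show "A' (Re w) * (Re w - Re v) - (A (Re w) - A (Re v)) \<le> 0"
        by (simp add: right_diff_distrib)
    qed
    then show ?thesis by blast
  qed
  have mem: "\<sigma> i \<in> {0,1,2}" if "\<sigma> permutes {0,1,2::nat}" "i \<in> {0,1,2}" for \<sigma> i
    using permutes_in_image[OF that(1)] that(2) by simp
  show ?thesis
    unfolding S3_def
  proof (rule sum_nonneg)
    fix \<sigma> assume "\<sigma> \<in> {\<sigma>. \<sigma> permutes {0,1,2::nat}}"
    then have p: "\<sigma> permutes {0,1,2::nat}" by simp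
    have r: "Re (z (\<sigma> i)) \<in> J" if "i \<in> {0,1,2}" for i
      using reJ mem[OF p that] by blast
    have J0: "Re (z (\<sigma> 0)) \<in> J" and J1: "Re (z (\<sigma> 1)) \<in> J" and J2: "Re (z (\<sigma> 2)) \<in> J"
      using r by auto
    from sgn show "0 \<le> ReK_Gamma A A' (z (\<sigma> 0)) (z (\<sigma> 1)) * ReK_Gamma A A' (z (\<sigma> 0)) (z (\<sigma> 2))"
    proof
      assume h: "\<forall>w z. Re w \<in> J \<longrightarrow> Re z \<in> J \<longrightarrow> ReK_Gamma A A' w z \<ge> 0"
      show ?thesis using h J0 J1 J2 by (simp add: mult_nonneg_nonneg)
    next
      assume h: "\<forall>w z. Re w \<in> J \<longrightarrow> Re z \<in> J \<longrightarrow> ReK_Gamma A A' w z \<le> 0"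
      show ?thesis using h J0 J1 J2 by (simp add: mult_nonpos_nonpos)
    qed
  qed
qed

end
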